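(* Let $\mathbf{S}$ be a distributive meet semilattice and $n\ge1$ an integer. Then the lattice $\mathrm{Fi}_n\mathbf{S}$ of all $n$-filters on $\mathbf{S}$, ordered by inclusion, is a distributive lattice.
   Context: A meet semilattice is distributive if whenever $x\wedge y\le z$ there are $x'\ge x$ and $y'\ge y$ with $x'\wedge y'=z$. For a set $X$, $Y\subseteq_n X$ means $Y$ is a non-empty subset of $X$ with $|Y|\le n$. An $n$-filter on $\mathbf{S}$ is an upset $F$ such that for every non-empty finite $X\subseteq F$: if $\bigwedge Y\in F$ for every $Y\subseteq_n X$ then $\bigwedge X\in F$. In $\mathrm{Fi}_n\mathbf{S}$ meets are intersections and the join of two $n$-filters is the $n$-filter generated by their union. *)

theory Defs
  imports Main
begin

definition distributive_msl :: "('a::semilattice_inf) itself \<Rightarrow> bool" where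
  "distributive_msl _ \<longleftrightarrow>
     (\<forall>x y z::'a. inf x y \<le> z \<longrightarrow> (\<exists>x' y'. x \<le> x' \<and> y \<le> y' \<and> inf x' y' = z))"

definition nfilter :: "nat \<Rightarrow> ('a::semilattice_inf) set \<Rightarrow> bool" where
  "nfilter n F \<longleftrightarrow>
     (\<forall>x\<in>F. \<forall>y. x \<le> y \<longrightarrow> y \<in> F) \<and>
     (\<forall>X. finite X \<and> X \<noteq> {} \<and> X \<subseteq> F \<longrightarrow>
        (\<forall>Y. Y \<noteq> {} \<and> Y \<subseteq> X \<and> card Y \<le> n \<longrightarrow> Inf_fin Y \<in> F) \<longrightarrow>
        Inf_fin X \<in> F)"

definition nfilter_gen :: "nat \<Rightarrow> ('a::semilattice_inf) set \<Rightarrow> 'a set" where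
  "nfilter_gen n A = \<Inter>{F. nfilter n F \<and> A \<subseteq> F}"

definition nfilter_join :: "nat \<Rightarrow> ('a::semilattice_inf) set \<Rightarrow> 'a set \<Rightarrow> 'a set" where
  "nfilter_join n F G = nfilter_gen n (F \<union> G)"

end

theory Submission
  imports Defs
begin

lemma gen_distrib:
  assumes D: "distributive_msl TYPE('a::semilattice_inf)"
    and fin: "finite X" and ne: "X \<noteq> {}"
  shows "\<And>z::'a. Inf_fin X \<le> z \<Longrightarrow> \<exists>g. (\<forall>x\<in>X. x \<le> g x) \<and> Inf_fin (g ` X) = z"
  using fin ne
proof (induction X rule: finite_ne_induct)
  case (singleton x)
  then show ?case by (intro exI[of _ "\<lambda>_. z"]) auto
next
  case (insert a X)
  have "inf a (Inf_fin X) \<le> z" using insert by simp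
  then obtain a' m' where a': "a \<le> a'" "Inf_fin X \<le> m'" "inf a' m' = z"
    using D unfolding distributive_msl_def by blast
  obtain g where g: "\<forall>x\<in>X. x \<le> g x" "Inf_fin (g ` X) = m'" using insert.IH a'(2) by blast
  have im: "(g(a := a')) ` insert a X = insert a' (g ` X)" using insert.hyps(3)
    by (auto simp: image_def)
  have "Inf_fin (insert a' (g ` X)) = inf a' m'"
    using insert.hyps g(2) by simp
  then show ?case using im a' g insert.hyps(3)
    by (intro exI[of _ "g(a := a')"]) auto
qed

lemma nfilter_Inter:
  assumes "\<forall>F\<in>S. nfilter n F"
  shows "nfilter n (\<Inter>S)"
  unfolding nfilter_def
proof (intro conjI allI impI ballI)
  fix x y assume "x \<in> \<Inter>S" "x \<le> y"
  then show "y \<in> \<Inter>S" using assms unfolding nfilter_def by blast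
next
  fix X assume X: "finite X \<and> X \<noteq> {} \<and> X \<subseteq> \<Inter>S"
    and Y: "\<forall>Y. Y \<noteq> {} \<and> Y \<subseteq> X \<and> card Y \<le> n \<longrightarrow> Inf_fin Y \<in> \<Inter>S"
  show "Inf_fin X \<in> \<Inter>S"
  proof
    fix F assume F: "F \<in> S"
    then have nf: "nfilter n F" using assms by blast
    have "X \<subseteq> F" using X F by blast
    moreover have "\<forall>Y. Y \<noteq> {} \<and> Y \<subseteq> X \<and> card Y \<le> n \<longrightarrow> Inf_fin Y \<in> F"
      using Y F by blast
    ultimately show "Inf_fin X \<in> F" using nf X unfolding nfilter_def by blast
  qed
qed

lemma nfilter_gen_nf: "nfilter n (nfilter_gen n A)"
  unfolding nfilter_gen_def by (rule nfilter_Inter) auto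

lemma nfilter_gen_sup: "A \<subseteq> nfilter_gen n A"
  unfolding nfilter_gen_def by auto

lemma nfilter_gen_least: "nfilter n H \<Longrightarrow> A \<subseteq> H \<Longrightarrow> nfilter_gen n A \<subseteq> H"
  unfolding nfilter_gen_def by auto

lemma T_nfilter:
  fixes x :: "'a::semilattice_inf"
  assumes D: "distributive_msl TYPE('a)"
    and J: "nfilter n J"
  shows "nfilter n {a. \<forall>u. a \<le> u \<and> x \<le> u \<longrightarrow> u \<in> J}" (is "nfilter n ?T")
  unfolding nfilter_def
proof (intro conjI allI impI ballI)
  fix a y assume "a \<in> ?T" "a \<le> y"
  then show "y \<in> ?T" by (auto intro: order_trans)
next
  fix X assume X: "finite X \<and> X \<noteq> {} \<and> X \<subseteq> ?T"
    and Y: "\<forall>Y. Y \<noteq> {} \<and> Y \<subseteq> X \<and> card Y \<le> n \<longrightarrow> Inf_fin Y \<in> ?T"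
  show "Inf_fin X \<in> ?T"
  proof (intro CollectI allI impI)
    fix u assume u: "Inf_fin X \<le> u \<and> x \<le> u"
    obtain g where g: "\<forall>y\<in>X. y \<le> g y" "Inf_fin (g ` X) = u"
      using gen_distrib[OF D] X u by blast
    have gu: "\<And>y. y \<in> X \<Longrightarrow> u \<le> g y"
      using g(2) X by (metis Inf_fin.coboundedI finite_imageI imageI)
    have gx: "\<And>y. y \<in> X \<Longrightarrow> x \<le> g y" using gu u order_trans by blast
    have J2: "\<forall>X. finite X \<and> X \<noteq> {} \<and> X \<subseteq> J \<longrightarrow>
        (\<forall>Y. Y \<noteq> {} \<and> Y \<subseteq> X \<and> card Y \<le> n \<longrightarrow> Inf_fin Y \<in> J) \<longrightarrow> Inf_fin X \<in> J"
      using J unfolding nfilter_def by blast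
    have "Inf_fin (g ` X) \<in> J"
    proof (rule J2[rule_format])
      show "finite (g ` X) \<and> g ` X \<noteq> {} \<and> g ` X \<subseteq> J"
        using X g(1) gx by auto
    next
      fix Y' assume Y': "Y' \<noteq> {} \<and> Y' \<subseteq> g ` X \<and> card Y' \<le> n"
      define Y where "Y = inv_into X g ` Y'"
      have YX: "Y \<subseteq> X" using Y' unfolding Y_def by (auto intro: inv_into_into)
      have Yne: "Y \<noteq> {}" using Y' unfolding Y_def by auto
      have finY': "finite Y'" using Y' X finite_subset by blast
      have cY: "card Y \<le> n" using Y' card_image_le[OF finY'] unfolding Y_def by (meson order_trans)
      have finY: "finite Y" unfolding Y_def using finY' by simp
      have YT: "Inf_fin Y \<in> ?T" using Y YX Yne cY by blast
      have le: "Inf_fin Y \<le> Inf_fin Y'"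
      proof (rule Inf_fin.boundedI)
        show "finite Y'" by fact
        show "Y' \<noteq> {}" using Y' by auto
      next
        fix b assume b: "b \<in> Y'"
        have bi: "inv_into X g b \<in> X" using b Y' by (auto intro: inv_into_into)
        have "g (inv_into X g b) = b" using b Y' by (auto intro: f_inv_into_f)
        then have "inv_into X g b \<le> b" using g(1) bi by metis
        moreover have "Inf_fin Y \<le> inv_into X g b"
          using finY b unfolding Y_def by (intro Inf_fin.coboundedI) auto
        ultimately show "Inf_fin Y \<le> b" by (rule order_trans[rotated])
      qed
      have "x \<le> Inf_fin Y'"
        using Y' gx finY' by (intro Inf_fin.boundedI) auto
      then show "Inf_fin Y' \<in> J" using YT le by blast
    qed
    then show "u \<in> J" using g(2) by simp
  qed
qed

theorem mainTheorem3:
  fixes n :: nat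
  assumes "distributive_msl TYPE('a::semilattice_inf)"
    and "n \<ge> 1"
  shows "(\<forall>F G :: 'a set. nfilter n F \<and> nfilter n G \<longrightarrow>
            nfilter n (F \<inter> G) \<and>
            nfilter n (nfilter_join n F G) \<and> F \<subseteq> nfilter_join n F G \<and> G \<subseteq> nfilter_join n F G \<and>
            (\<forall>H. nfilter n H \<and> F \<subseteq> H \<and> G \<subseteq> H \<longrightarrow> nfilter_join n F G \<subseteq> H))
       \<and> (\<forall>F G H :: 'a set. nfilter n F \<and> nfilter n G \<and> nfilter n H \<longrightarrow>
            F \<inter> nfilter_join n G H = nfilter_join n (F \<inter> G) (F \<inter> H))"
proof (intro conjI allI impI)
  fix F G :: "'a set" assume FG: "nfilter n F \<and> nfilter n G"
  show "nfilter n (F \<inter> G)" using nfilter_Inter[of "{F,G}" n] FG by simp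
  show "nfilter n (nfilter_join n F G)" unfolding nfilter_join_def by (rule nfilter_gen_nf)
  show "F \<subseteq> nfilter_join n F G" "G \<subseteq> nfilter_join n F G"
    unfolding nfilter_join_def using nfilter_gen_sup by blast+
  fix H assume "nfilter n H \<and> F \<subseteq> H \<and> G \<subseteq> H"
  then show "nfilter_join n F G \<subseteq> H" unfolding nfilter_join_def
    by (intro nfilter_gen_least) auto
next
  fix F G H :: "'a set" assume FGH: "nfilter n F \<and> nfilter n G \<and> nfilter n H"
  have FG: "nfilter n (F \<inter> G)" "nfilter n (F \<inter> H)"
    using nfilter_Inter[of "{F,G}" n] nfilter_Inter[of "{F,H}" n] FGH by simp_all
  define J where "J = nfilter_join n (F \<inter> G) (F \<inter> H)"
  have J: "nfilter n J" unfolding J_def nfilter_join_def by (rule nfilter_gen_nf)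
  show "F \<inter> nfilter_join n G H = nfilter_join n (F \<inter> G) (F \<inter> H)"
    unfolding J_def[symmetric]
  proof
    show "J \<subseteq> F \<inter> nfilter_join n G H"
      unfolding J_def
    proof (rule Int_greatest)
      show "nfilter_join n (F \<inter> G) (F \<inter> H) \<subseteq> F"
        unfolding nfilter_join_def using FGH by (intro nfilter_gen_least) auto
      have "G \<union> H \<subseteq> nfilter_join n G H" unfolding nfilter_join_def by (rule nfilter_gen_sup)
      then show "nfilter_join n (F \<inter> G) (F \<inter> H) \<subseteq> nfilter_join n G H"
        unfolding nfilter_join_def[of n "F \<inter> G"]
        by (intro nfilter_gen_least) (auto simp: nfilter_join_def intro: nfilter_gen_nf)
    qed
  next
    show "F \<inter> nfilter_join n G H \<subseteq> J"
    proof
      fix x assume x: "x \<in> F \<inter> nfilter_join n G H"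
      let ?T = "{a. \<forall>u. a \<le> u \<and> x \<le> u \<longrightarrow> u \<in> J}"
      have T: "nfilter n ?T" by (rule T_nfilter[OF assms(1) J])
      have JU: "(F \<inter> G) \<union> (F \<inter> H) \<subseteq> J" unfolding J_def nfilter_join_def by (rule nfilter_gen_sup)
      have up: "\<And>K a u. nfilter n K \<Longrightarrow> a \<in> K \<Longrightarrow> a \<le> u \<Longrightarrow> u \<in> K"
        unfolding nfilter_def by blast
      have "G \<union> H \<subseteq> ?T"
      proof
        fix a assume a: "a \<in> G \<union> H"
        show "a \<in> ?T"
        proof (intro CollectI allI impI)
          fix u assume u: "a \<le> u \<and> x \<le> u"
          have "u \<in> F" using up[of F x u] FGH x u by blast
          moreover have "u \<in> G \<union> H" using up[of G a u] up[of H a u] FGH a u by blast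
          ultimately show "u \<in> J" using JU by blast
        qed
      qed
      then have "nfilter_join n G H \<subseteq> ?T" unfolding nfilter_join_def
        by (intro nfilter_gen_least[OF T])
      then show "x \<in> J" using x by blast
    qed
  qed
qed

end
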